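(* Consider the discrete setting described in the context, and let $\rho_\infty^*>0$ be defined from the initial datum as in the context. Assume there exist constants $0<\gamma_1<\rho_\infty^*$ and $\gamma_2>0$ such that for all $i\in\mathcal I$, $j\in\mathcal J$, $$(\rho_\infty^*-\gamma_1)\chi_{1,j}\le\mathfrak f^0_{ij}\le(\rho_\infty^*+\gamma_2)\chi_{1,j},\qquad(\rho_\infty^*+\gamma_2)^{-1}\chi_{2,j}\le\mathfrak g^0_{ij}\le(\rho_\infty^*-\gamma_1)^{-1}\chi_{2,j}.$$ Assume moreover that $\lambda=\Delta x/(2\Delta t)\ge v^*/2$. Then the nonlinear scheme admits a solution $(\mathfrak f^n_{ij},\mathfrak g^n_{ij})_{i\in\mathcal I,j\in\mathcal J,n\ge0}$ such that for all $i,j$ and $n\ge0$, $$(\rho_\infty^*-\gamma_1)\chi_{1,j}\le\mathfrak f^n_{ij}\le(\rho_\infty^*+\gamma_2)\chi_{1,j},\qquad(\rho_\infty^*+\gamma_2)^{-1}\chi_{2,j}\le\mathfrak g^n_{ij}\le(\rho_\infty^*-\gamma_1)^{-1}\chi_{2,j}.$$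
   Context: Space mesh: the torus $\mathbb T$ (length $|\mathbb T|$) split into $N$ uniform cells of length $\Delta x$, $i\in\mathcal I=\mathbb Z/N\mathbb Z$ (periodic). Velocity mesh: $v^*>0$, $\Delta v=v^*/L$, $j\in\mathcal J=\{-L+1,\dots,L\}$, midpoints $v_j=(j-\tfrac12)\Delta v$. Time step $\Delta t>0$; $\lambda=\Delta x/(2\Delta t)$ fixed. For $k=1,2$: $\chi_{k,j}>0$, $\chi_{k,j}=\chi_{k,1-j}$, $\sum_j\Delta v\chi_{k,j}=1$, $0<\underline D_k\le\sum_j\Delta v\,v_j^2\chi_{k,j}\le\overline D_k$, $\sum_j\Delta v\,v_j^4\chi_{k,j}\le\overline Q_k$. Given initial cell values $\mathfrak f^0_{ij},\mathfrak g^0_{ij}$, set $M_0=\sum_{i,j}\Delta x\Delta v(\mathfrak f^0_{ij}-\mathfrak g^0_{ij})$ and $\rho_\infty^*=\frac{M_0+\sqrt{M_0^2+4|\mathbb T|}}{2|\mathbb T|}$ (the unique positive solution of $M_0=|\mathbb T|(\rho_\infty^*-1/\rho_\infty^* )$). Nonlinear scheme: for $n\ge0$, $i\in\mathcal I$, $j\in\mathcal J$, $\frac{\mathfrak f^{n+1}_{ij}-\mathfrak f^n_{ij}}{\Delta t}+\frac{1}{\Delta x\Delta v}(\mathcal F^{n+1}_{i+\frac12,j}-\mathcal F^{n+1}_{i-\frac12,j})=\chi_{1,j}-\rho^{n+1}_{\mathfrak g,i}\mathfrak f^{n+1}_{ij}$, $\frac{\mathfrak g^{n+1}_{ij}-\mathfrak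 g^n_{ij}}{\Delta t}+\frac{1}{\Delta x\Delta v}(\mathcal G^{n+1}_{i+\frac12,j}-\mathcal G^{n+1}_{i-\frac12,j})=\chi_{2,j}-\rho^{n+1}_{\mathfrak f,i}\mathfrak g^{n+1}_{ij}$, with $\rho_{\mathfrak f,i}=\sum_j\Delta v\,\mathfrak f_{ij}$, $\rho_{\mathfrak g,i}=\sum_j\Delta v\,\mathfrak g_{ij}$, and Lax–Friedrichs fluxes $\mathcal F^{n+1}_{i+\frac12,j}=\Delta v\frac{v_j}{2}(\mathfrak f^{n+1}_{i+1,j}+\mathfrak f^{n+1}_{ij})-\Delta v\lambda(\mathfrak f^{n+1}_{i+1,j}-\mathfrak f^{n+1}_{ij})$, $\mathcal G$ likewise with $\mathfrak g$. *)

theory Defs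
  imports "HOL-Analysis.Analysis"
begin

definition vidx :: "nat \<Rightarrow> int set" where
  "vidx L = {- int L + 1 .. int L}"

definition vel :: "real \<Rightarrow> int \<Rightarrow> real" where
  "vel dv j = (real_of_int j - 1/2) * dv"

definition csucc :: "nat \<Rightarrow> nat \<Rightarrow> nat" where
  "csucc N i = (i + 1) mod N"

definition cpred :: "nat \<Rightarrow> nat \<Rightarrow> nat" where
  "cpred N i = (i + N - 1) mod N"

definition dens :: "nat \<Rightarrow> real \<Rightarrow> (nat \<Rightarrow> int \<Rightarrow> real) \<Rightarrow> nat \<Rightarrow> real" where
  "dens L dv h i = (\<Sum>j\<in>vidx L. dv * h i j)"

text \<open>Lax--Friedrichs flux at interface i+1/2.\<close>
definition lfflux :: "nat \<Rightarrow> real \<Rightarrow> real \<Rightarrow> (nat \<Rightarrow> int \<Rightarrow> real) \<Rightarrow> nat \<Rightarrow> int \<Rightarrow> real" where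
  "lfflux N dv lam h i j =
     dv * (vel dv j / 2) * (h (csucc N i) j + h i j) - dv * lam * (h (csucc N i) j - h i j)"

definition scheme_step ::
  "nat \<Rightarrow> nat \<Rightarrow> real \<Rightarrow> real \<Rightarrow> real \<Rightarrow> (int \<Rightarrow> real) \<Rightarrow> (int \<Rightarrow> real)
   \<Rightarrow> (nat \<Rightarrow> int \<Rightarrow> real) \<Rightarrow> (nat \<Rightarrow> int \<Rightarrow> real)
   \<Rightarrow> (nat \<Rightarrow> int \<Rightarrow> real) \<Rightarrow> (nat \<Rightarrow> int \<Rightarrow> real) \<Rightarrow> bool" where
  "scheme_step N L dx dv dt chi1 chi2 fo go fn gn \<longleftrightarrow>
     (\<forall>i<N. \<forall>j\<in>vidx L.
        (fn i j - fo i j) / dt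
          + (lfflux N dv (dx / (2 * dt)) fn i j - lfflux N dv (dx / (2 * dt)) fn (cpred N i) j) / (dx * dv)
          = chi1 j - dens L dv gn i * fn i j
      \<and> (gn i j - go i j) / dt
          + (lfflux N dv (dx / (2 * dt)) gn i j - lfflux N dv (dx / (2 * dt)) gn (cpred N i) j) / (dx * dv)
          = chi2 j - dens L dv fn i * gn i j)"

definition admissible_chi :: "nat \<Rightarrow> real \<Rightarrow> (int \<Rightarrow> real) \<Rightarrow> real \<Rightarrow> real \<Rightarrow> real \<Rightarrow> bool" where
  "admissible_chi L dv chi Dlo Dhi Q \<longleftrightarrow>
     (\<forall>j\<in>vidx L. chi j > 0) \<and> (\<forall>j\<in>vidx L. chi j = chi (1 - j))
     \<and> (\<Sum>j\<in>vidx L. dv * chi j) = 1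
     \<and> 0 < Dlo \<and> Dlo \<le> (\<Sum>j\<in>vidx L. dv * (vel dv j)^2 * chi j)
     \<and> (\<Sum>j\<in>vidx L. dv * (vel dv j)^2 * chi j) \<le> Dhi
     \<and> (\<Sum>j\<in>vidx L. dv * (vel dv j)^4 * chi j) \<le> Q"

end

theory Submission
  imports Defs
begin


lemma alg:
  fixes dt dx dv lam v A B rho fi fo fs fp chi :: real
  assumes dt: "dt > 0" and dx: "dx > 0" and dv: "dv > 0" and lam: "lam = dx/(2*dt)"
    and A: "A = (lam - v/2)/(2*lam)" and B: "B = (lam + v/2)/(2*lam)"
    and eq: "fi*(2+dt*rho) = fo + dt*chi + A*fs + B*fp"
  shows "(fi - fo)/dt + ((dv*(v/2)*(fs+fi) - dv*lam*(fs-fi)) - (dv*(v/2)*(fi+fp) - dv*lam*(fi-fp)))/(dx*dv) = chi - rho*fi"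
proof -
  have l: "lam > 0" using dt dx lam by simp
  have dx2: "dx = 2*lam*dt" using dt lam by simp
  have A2: "2*lam*A = lam - v/2" using l A by simp
  have B2: "2*lam*B = lam + v/2" using l B by simp
  have X: "(dv*(v/2)*(fs+fi) - dv*lam*(fs-fi)) - (dv*(v/2)*(fi+fp) - dv*lam*(fi-fp))
      = dv*(2*lam*fi - (lam - v/2)*fs - (lam + v/2)*fp)" by (simp add: field_simps)
  also have "\<dots> = dv*(2*lam)*(fi - A*fs - B*fp)" unfolding A2[symmetric] B2[symmetric] by (simp add: algebra_simps)
  finally have X2: "((dv*(v/2)*(fs+fi) - dv*lam*(fs-fi)) - (dv*(v/2)*(fi+fp) - dv*lam*(fi-fp)))/(dx*dv)
     = (dv*(2*lam)*(fi - A*fs - B*fp))/((dv*(2*lam))*dt)" unfolding dx2 by (simp add: mult.commute mult.left_commute)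
  also have "\<dots> = (fi - A*fs - B*fp)/dt" using dv l by (simp only: mult_divide_mult_cancel_left_if) simp
  finally have X3: "((dv*(v/2)*(fs+fi) - dv*lam*(fs-fi)) - (dv*(v/2)*(fi+fp) - dv*lam*(fi-fp)))/(dx*dv) = (fi - A*fs - B*fp)/dt" .
  have "(fi - fo)/dt + (fi - A*fs - B*fp)/dt = ((fi - fo) + (fi - A*fs - B*fp))/dt"
    by (rule add_divide_distrib[symmetric])
  also have "(fi - fo) + (fi - A*fs - B*fp) = dt*(chi - rho*fi)" using eq by (simp add: algebra_simps)
  also have "dt*(chi - rho*fi)/dt = chi - rho*fi" using dt by simp
  finally show ?thesis unfolding X3 .
qed

lemma csucc_lt: "N > 0 \<Longrightarrow> csucc N i < N" by (simp add: csucc_def)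
lemma cpred_lt: "N > 0 \<Longrightarrow> cpred N i < N" by (simp add: cpred_def)
lemma csucc_cpred: assumes "i < N" shows "csucc N (cpred N i) = i"
proof -
  have "((i + N - 1) mod N + 1) mod N = (i + N - 1 + 1) mod N" by (rule mod_add_left_eq)
  also have "i + N - 1 + 1 = i + N" using assms by simp
  finally show ?thesis using assms by (simp add: csucc_def cpred_def)
qed



definition boxp :: "nat \<Rightarrow> nat \<Rightarrow> real \<Rightarrow> real \<Rightarrow> (int\<Rightarrow>real) \<Rightarrow> (int\<Rightarrow>real) \<Rightarrow> (nat\<Rightarrow>int\<Rightarrow>real) \<Rightarrow> (nat\<Rightarrow>int\<Rightarrow>real) \<Rightarrow> bool" where
"boxp N L a c chi1 chi2 f g \<longleftrightarrow> (\<forall>i<N. \<forall>j\<in>vidx L. a*chi1 j \<le> f i j \<and> f i j \<le> c*chi1 j \<and> chi2 j / c \<le> g i j \<and> g i j \<le> chi2 j / a)"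

locale stepctx =
  fixes N L :: nat and dx dv dt a c :: real and chi1 chi2 :: "int \<Rightarrow> real"
    and fo go :: "nat \<Rightarrow> int \<Rightarrow> real"
  assumes N: "N > 0" and dv: "dv > 0" and dt: "dt > 0" and dx: "dx > 0"
    and lamb: "dx/(2*dt) \<ge> real L * dv / 2"
    and c1: "\<forall>j\<in>vidx L. chi1 j > 0" and c2: "\<forall>j\<in>vidx L. chi2 j > 0"
    and s1: "(\<Sum>j\<in>vidx L. dv * chi1 j) = 1" and s2: "(\<Sum>j\<in>vidx L. dv * chi2 j) = 1"
    and a: "0 < a" and ac: "a \<le> c"
    and box0: "boxp N L a c chi1 chi2 fo go"
begin

definition "lam = dx/(2*dt)"
definition "Aj j = (lam - vel dv j/2)/(2*lam)"
definition "Bj j = (lam + vel dv j/2)/(2*lam)"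
definition "Tf f g i j = (fo i j + dt*chi1 j + Aj j * f (csucc N i) j + Bj j * f (cpred N i) j) / (2 + dt * dens L dv g i)"
definition "Tg f g i j = (go i j + dt*chi2 j + Aj j * g (csucc N i) j + Bj j * g (cpred N i) j) / (2 + dt * dens L dv f i)"
definition "lep f1 g1 f2 g2 \<longleftrightarrow> (\<forall>i<N. \<forall>j\<in>vidx L. f1 i j \<le> f2 i j \<and> g2 i j \<le> g1 i j)"

lemma lam_pos: "lam > 0" using dx dt by (simp add: lam_def)

lemma vel_bound: assumes "j \<in> vidx L" shows "\<bar>vel dv j\<bar> \<le> 2*lam"
proof -
  have j: "- int L + 1 \<le> j" "j \<le> int L" using assms by (auto simp: vidx_def)
  have "\<bar>real_of_int j - 1/2\<bar> \<le> real L" using j by linarith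
  hence "\<bar>vel dv j\<bar> \<le> real L * dv" using dv by (simp add: vel_def abs_mult)
  thus ?thesis using lamb by (simp add: lam_def)
qed

lemma AB: assumes "j \<in> vidx L" shows "Aj j \<ge> 0" "Bj j \<ge> 0" "Aj j + Bj j = 1"
proof -
  have v: "vel dv j \<le> 2*lam" "- vel dv j \<le> 2*lam" using vel_bound[OF assms] by (simp_all add: abs_le_iff)
  have l: "lam > 0" by (rule lam_pos)
  have "lam - vel dv j/2 \<ge> 0" "lam + vel dv j/2 \<ge> 0" using v by linarith+
  thus "Aj j \<ge> 0" "Bj j \<ge> 0" unfolding Aj_def Bj_def using l by simp_all
  have "Aj j + Bj j = ((lam - vel dv j/2) + (lam + vel dv j/2))/(2*lam)"
    unfolding Aj_def Bj_def by (rule add_divide_distrib[symmetric])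
  also have "\<dots> = 1" using l by (simp add: field_simps)
  finally show "Aj j + Bj j = 1" .
qed

lemma c_pos: "c > 0" using a ac by simp

lemma dens_f: assumes "boxp N L a c chi1 chi2 f g" "i < N"
  shows "a \<le> dens L dv f i" "dens L dv f i \<le> c" "1/c \<le> dens L dv g i" "dens L dv g i \<le> 1/a"
proof -
  have b: "\<forall>j\<in>vidx L. a*chi1 j \<le> f i j \<and> f i j \<le> c*chi1 j \<and> chi2 j / c \<le> g i j \<and> g i j \<le> chi2 j / a"
    using assms by (auto simp: boxp_def)
  have "(\<Sum>j\<in>vidx L. dv * (a*chi1 j)) = a * (\<Sum>j\<in>vidx L. dv * chi1 j)" by (simp add: sum_distrib_left mult.left_commute)
  hence "a = (\<Sum>j\<in>vidx L. dv * (a*chi1 j))" using s1 by simp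
  also
  have "\<dots> \<le> dens L dv f i" unfolding dens_def by (rule sum_mono, rule mult_left_mono) (use b dv in auto)
  finally show "a \<le> dens L dv f i" .
  have "dens L dv f i \<le> (\<Sum>j\<in>vidx L. dv * (c*chi1 j))" unfolding dens_def by (rule sum_mono, rule mult_left_mono) (use b dv in auto)
  also have "(\<Sum>j\<in>vidx L. dv * (c*chi1 j)) = c * (\<Sum>j\<in>vidx L. dv * chi1 j)" by (simp add: sum_distrib_left mult.left_commute)
  also have "\<dots> = c" using s1 by simp
  finally show "dens L dv f i \<le> c" .
  have "(\<Sum>j\<in>vidx L. dv * (chi2 j / c)) = (\<Sum>j\<in>vidx L. dv * chi2 j) / c" by (simp add: sum_divide_distrib)
  hence "1/c = (\<Sum>j\<in>vidx L. dv * (chi2 j / c))" using s2 by simp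
  also have "\<dots> \<le> dens L dv g i" unfolding dens_def by (rule sum_mono, rule mult_left_mono) (use b dv in auto)
  finally show "1/c \<le> dens L dv g i" .
  have "dens L dv g i \<le> (\<Sum>j\<in>vidx L. dv * (chi2 j / a))" unfolding dens_def by (rule sum_mono, rule mult_left_mono) (use b dv in auto)
  also have "(\<Sum>j\<in>vidx L. dv * (chi2 j / a)) = (\<Sum>j\<in>vidx L. dv * chi2 j) / a" by (simp add: sum_divide_distrib)
  also have "\<dots> = 1/a" using s2 by simp
  finally show "dens L dv g i \<le> 1/a" .
qed

end


lemma gen_bounds:
  fixes lo hi K dt A B fo fs fp rho :: real
  assumes "0<dt" "0<K" "0<lo" "lo\<le>hi"
    "lo*K \<le> fo" "fo \<le> hi*K" "lo*K \<le> fs" "fs \<le> hi*K" "lo*K \<le> fp" "fp \<le> hi*K"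
    "A\<ge>0" "B\<ge>0" "A+B=1" "1/hi \<le> rho" "rho \<le> 1/lo"
  shows "lo*K \<le> (fo + dt*K + A*fs + B*fp)/(2+dt*rho)" "(fo + dt*K + A*fs + B*fp)/(2+dt*rho) \<le> hi*K"
proof -
  have hi: "hi > 0" using assms(3,4) by linarith
  have "A*fs \<le> A*(hi*K)" "B*fp \<le> B*(hi*K)" using mult_left_mono[OF assms(8) assms(11)] mult_left_mono[OF assms(10) assms(12)] by simp_all
  moreover have "A*(hi*K) + B*(hi*K) = hi*K" using assms(13) by (metis distrib_right mult_1)
  moreover have "(2*hi+dt)*K = hi*K + dt*K + hi*K" by (simp add: algebra_simps)
  ultimately have n1: "fo + dt*K + A*fs + B*fp \<le> (2*hi+dt)*K" using assms(6) by linarith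
  have "A*(lo*K) \<le> A*fs" "B*(lo*K) \<le> B*fp" using mult_left_mono[OF assms(7) assms(11)] mult_left_mono[OF assms(9) assms(12)] by simp_all
  moreover have "A*(lo*K) + B*(lo*K) = lo*K" using assms(13) by (metis distrib_right mult_1)
  moreover have "(2*lo+dt)*K = lo*K + dt*K + lo*K" by (simp add: algebra_simps)
  ultimately have n2: "(2*lo+dt)*K \<le> fo + dt*K + A*fs + B*fp" using assms(5) by linarith
  have d1: "2 + dt/hi \<le> 2+dt*rho" using mult_left_mono[OF assms(14), of dt] assms(1) by simp
  have d2: "2+dt*rho \<le> 2 + dt/lo" using mult_left_mono[OF assms(15), of dt] assms(1) by simp
  have p1: "0 < 2 + dt/hi" using hi assms(1) by (simp add: add_pos_nonneg)
  have "(fo + dt*K + A*fs + B*fp)/(2+dt*rho) \<le> (2*hi+dt)*K / (2 + dt/hi)"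
  proof (rule frac_le)
    show "0 \<le> (2*hi+dt)*K" using assms(1,2) hi by simp
    show "fo + dt*K + A*fs + B*fp \<le> (2*hi+dt)*K" by (rule n1)
    show "0 < 2 + dt/hi" by (rule p1)
    show "2 + dt/hi \<le> 2+dt*rho" by (rule d1)
  qed
  also have "(2*hi+dt)*K / (2 + dt/hi) = hi*K" using hi p1 by (simp add: field_simps)
  finally show "(fo + dt*K + A*fs + B*fp)/(2+dt*rho) \<le> hi*K" .
  have "lo*K = (2*lo+dt)*K / (2 + dt/lo)" using assms(1,3) by (simp add: field_simps)
  also have "\<dots> \<le> (fo + dt*K + A*fs + B*fp)/(2+dt*rho)"
  proof (rule frac_le)
    have "0 \<le> (2*lo+dt)*K" using assms(1,2,3) by simp
    thus "0 \<le> fo + dt*K + A*fs + B*fp" using n2 by linarith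
    show "(2*lo+dt)*K \<le> fo + dt*K + A*fs + B*fp" by (rule n2)
    show "0 < 2+dt*rho" using p1 d1 by linarith
    show "2+dt*rho \<le> 2 + dt/lo" by (rule d2)
  qed
  finally show "lo*K \<le> (fo + dt*K + A*fs + B*fp)/(2+dt*rho)" .
qed

lemma gen_mono:
  fixes dt A B fo fs1 fs2 fp1 fp2 rho1 rho2 K :: real
  assumes "0 \<le> A" "0\<le>B" "0\<le>fo" "0\<le>dt" "0\<le>K" "fs1 \<le> fs2" "fp1 \<le> fp2" "0 \<le> fs1" "0\<le>fp1"
    "rho2 \<le> rho1" "0 \<le> rho2"
  shows "(fo + dt*K + A*fs1 + B*fp1)/(2+dt*rho1) \<le> (fo + dt*K + A*fs2 + B*fp2)/(2+dt*rho2)"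
proof (rule frac_le)
  have "0 \<le> fs2" "0 \<le> fp2" using assms(6-9) by linarith+
  hence "0 \<le> A*fs2" "0 \<le> B*fp2" "0 \<le> dt*K" using assms(1,2,4,5) by simp_all
  thus "0 \<le> fo + dt*K + A*fs2 + B*fp2" using assms(3) by linarith
  have "A*fs1 \<le> A*fs2" "B*fp1 \<le> B*fp2" using mult_left_mono[OF assms(6) assms(1)] mult_left_mono[OF assms(7) assms(2)] by simp_all
  thus "fo + dt*K + A*fs1 + B*fp1 \<le> fo + dt*K + A*fs2 + B*fp2" by simp
  show "0 < 2 + dt*rho2" using assms(4,11) by (simp add: add_pos_nonneg)
  show "2 + dt*rho2 \<le> 2 + dt*rho1" using mult_left_mono[OF assms(10) assms(4)] by simp
qed

context stepctx begin

lemma boxD: assumes "boxp N L a c chi1 chi2 f g" "i<N" "j\<in>vidx L"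
  shows "a*chi1 j \<le> f i j" "f i j \<le> c*chi1 j" "chi2 j / c \<le> g i j" "g i j \<le> chi2 j / a"
  using assms by (auto simp: boxp_def)

lemma box_inv: assumes B: "boxp N L a c chi1 chi2 f g"
  shows "boxp N L a c chi1 chi2 (Tf f g) (Tg f g)"
  unfolding boxp_def
proof (intro allI impI ballI)
  fix i j assume i: "i<N" and j: "j \<in> vidx L"
  have s: "csucc N i < N" and p: "cpred N i < N" using N by (simp_all add: csucc_lt cpred_lt)
  note bf = boxD[OF B i j] boxD[OF B s j] boxD[OF B p j] boxD[OF box0 i j]
  note d = dens_f[OF B i]
  have k1: "chi1 j > 0" "chi2 j > 0" using c1 c2 j by auto
  have A: "a * chi1 j \<le> Tf f g i j \<and> Tf f g i j \<le> c * chi1 j"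
    unfolding Tf_def using gen_bounds[OF dt k1(1) a ac bf(13) bf(14) bf(5) bf(6) bf(9) bf(10) AB[OF j] d(3) d(4)]
    by blast
  have ic: "0 < 1/c" "1/c \<le> 1/a" using a ac c_pos by (simp_all add: divide_simps)
  have cv: "1/c*chi2 j \<le> go i j" "go i j \<le> 1/a*chi2 j" "1/c*chi2 j \<le> g (csucc N i) j" "g (csucc N i) j \<le> 1/a*chi2 j"
     "1/c*chi2 j \<le> g (cpred N i) j" "g (cpred N i) j \<le> 1/a*chi2 j" "1/(1/a) \<le> dens L dv f i" "dens L dv f i \<le> 1/(1/c)"
    using bf(15,16,7,8,11,12) d(1,2) by simp_all
  have "(1/c) * chi2 j \<le> Tg f g i j \<and> Tg f g i j \<le> (1/a) * chi2 j"
    unfolding Tg_def using gen_bounds[OF dt k1(2) ic cv(1-6) AB[OF j] cv(7,8)]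
    by blast
  hence "chi2 j / c \<le> Tg f g i j \<and> Tg f g i j \<le> chi2 j / a" by simp
  with A
  show "a * chi1 j \<le> Tf f g i j \<and> Tf f g i j \<le> c * chi1 j \<and>
         chi2 j / c \<le> Tg f g i j \<and> Tg f g i j \<le> chi2 j / a" by simp
qed

lemma T_mono: assumes B1: "boxp N L a c chi1 chi2 f1 g1" and B2: "boxp N L a c chi1 chi2 f2 g2"
  and le: "lep f1 g1 f2 g2"
  shows "lep (Tf f1 g1) (Tg f1 g1) (Tf f2 g2) (Tg f2 g2)"
  unfolding lep_def
proof (intro allI impI ballI)
  fix i j assume i: "i<N" and j: "j \<in> vidx L"
  have s: "csucc N i < N" and p: "cpred N i < N" using N by (simp_all add: csucc_lt cpred_lt)
  have k1: "chi1 j > 0" "chi2 j > 0" using c1 c2 j by auto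
  have dg: "dens L dv g2 i \<le> dens L dv g1 i" unfolding dens_def
    by (rule sum_mono, rule mult_left_mono) (use le i dv in \<open>auto simp: lep_def\<close>)
  have df: "dens L dv f1 i \<le> dens L dv f2 i" unfolding dens_def
    by (rule sum_mono, rule mult_left_mono) (use le i dv in \<open>auto simp: lep_def\<close>)
  have dpos: "0 \<le> dens L dv g2 i" "0 \<le> dens L dv f1 i" using dens_f(3)[OF B2 i] dens_f(1)[OF B1 i] a c_pos
      divide_pos_pos[OF zero_less_one c_pos] by linarith+
  note l = le[unfolded lep_def, rule_format]
  note bb = boxD[OF B1 s j] boxD[OF B1 p j] boxD[OF B2 s j] boxD[OF B2 p j] boxD[OF box0 i j]
  have nn: "0 \<le> a*chi1 j" "0 \<le> chi2 j / c" using a c_pos k1 by simp_all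
  have nn2: "0 \<le> fo i j" "0 \<le> go i j" "0 \<le> f1 (csucc N i) j" "0 \<le> f1 (cpred N i) j"
     "0 \<le> g2 (csucc N i) j" "0 \<le> g2 (cpred N i) j"
    using bb nn by linarith+
  have "Tf f1 g1 i j \<le> Tf f2 g2 i j" unfolding Tf_def
    by (rule gen_mono[OF AB(1)[OF j] AB(2)[OF j] nn2(1) less_imp_le[OF dt] less_imp_le[OF k1(1)]
         conjunct1[OF l[OF s j]] conjunct1[OF l[OF p j]] nn2(3) nn2(4) dg dpos(1)])
  moreover have "Tg f2 g2 i j \<le> Tg f1 g1 i j" unfolding Tg_def
    by (rule gen_mono[OF AB(1)[OF j] AB(2)[OF j] nn2(2) less_imp_le[OF dt] less_imp_le[OF k1(2)]
         conjunct2[OF l[OF s j]] conjunct2[OF l[OF p j]] nn2(5) nn2(6) df dpos(2)])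
  ultimately show "Tf f1 g1 i j \<le> Tf f2 g2 i j \<and> Tg f2 g2 i j \<le> Tg f1 g1 i j" by simp
qed

end


context stepctx begin

definition "SS = {p. boxp N L a c chi1 chi2 (fst p) (snd p) \<and> lep (fst p) (snd p) (Tf (fst p) (snd p)) (Tg (fst p) (snd p))}"
definition "uf i j = Sup ((\<lambda>p. fst p i j) ` SS)"
definition "ug i j = Inf ((\<lambda>p. snd p i j) ` SS)"

lemma SS_D: "p \<in> SS \<Longrightarrow> boxp N L a c chi1 chi2 (fst p) (snd p)" "p \<in> SS \<Longrightarrow> lep (fst p) (snd p) (Tf (fst p) (snd p)) (Tg (fst p) (snd p))"
  by (auto simp: SS_def)

definition p0 :: "(nat \<Rightarrow> int \<Rightarrow> real) \<times> (nat \<Rightarrow> int \<Rightarrow> real)" where "p0 = ((\<lambda>i j. a*chi1 j), (\<lambda>i j. chi2 j / a))"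

lemma p0_box: "boxp N L a c chi1 chi2 (fst p0) (snd p0)"
  unfolding boxp_def p0_def
proof (intro allI impI ballI)
  fix i j assume "i < N" "j \<in> vidx L"
  hence k: "chi1 j > 0" "chi2 j > 0" using c1 c2 by auto
  have "a*chi1 j \<le> c*chi1 j" using mult_right_mono[OF ac less_imp_le[OF k(1)]] .
  moreover have "chi2 j / c \<le> chi2 j / a" using divide_left_mono[OF ac less_imp_le[OF k(2)]] a c_pos by simp
  ultimately show "a * chi1 j \<le> fst ((\<lambda>i j. a * chi1 j), (\<lambda>i j. chi2 j / a)) i j \<and>
         fst ((\<lambda>i j. a * chi1 j), (\<lambda>i j. chi2 j / a)) i j \<le> c * chi1 j \<and>
         chi2 j / c \<le> snd ((\<lambda>i j. a * chi1 j), (\<lambda>i j. chi2 j / a)) i j \<and>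
         snd ((\<lambda>i j. a * chi1 j), (\<lambda>i j. chi2 j / a)) i j \<le> chi2 j / a" by simp
qed

lemma p0_SS: "p0 \<in> SS"
proof -
  have B: "boxp N L a c chi1 chi2 (Tf (fst p0) (snd p0)) (Tg (fst p0) (snd p0))" using box_inv[of "fst p0" "snd p0"] p0_box by simp
  have "lep (fst p0) (snd p0) (Tf (fst p0) (snd p0)) (Tg (fst p0) (snd p0))"
    unfolding lep_def
  proof (intro allI impI ballI)
    fix i j assume i: "i < N" and j: "j \<in> vidx L"
    show "fst p0 i j \<le> Tf (fst p0) (snd p0) i j \<and> Tg (fst p0) (snd p0) i j \<le> snd p0 i j"
      using boxD[OF B i j] by (simp add: p0_def)
  qed
  thus ?thesis using p0_box by (simp add: SS_def)
qed

lemma SS_bdd: assumes "i < N" "j \<in> vidx L"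
  shows "bdd_above ((\<lambda>p. fst p i j) ` SS)" "bdd_below ((\<lambda>p. snd p i j) ` SS)"
proof -
  show "bdd_above ((\<lambda>p. fst p i j) ` SS)"
    by (rule bdd_aboveI[of _ "c*chi1 j"]) (use boxD(2)[OF SS_D(1) assms] in auto)
  show "bdd_below ((\<lambda>p. snd p i j) ` SS)"
    by (rule bdd_belowI[of _ "chi2 j / c"]) (use boxD(3)[OF SS_D(1) assms] in auto)
qed

lemma SS_le_u: assumes "p \<in> SS" "i < N" "j \<in> vidx L"
  shows "fst p i j \<le> uf i j" "ug i j \<le> snd p i j"
  unfolding uf_def ug_def
  by (rule cSup_upper, use assms in simp, rule SS_bdd[OF assms(2,3)])
     (rule cInf_lower, use assms in simp, rule SS_bdd[OF assms(2,3)])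

lemma SS_ne: "(\<lambda>p. fst p i j) ` SS \<noteq> {}" "(\<lambda>p. snd p i j) ` SS \<noteq> {}"
  using p0_SS by auto

lemma u_box: "boxp N L a c chi1 chi2 uf ug"
  unfolding boxp_def
proof (intro allI impI ballI)
  fix i j assume i: "i < N" and j: "j \<in> vidx L"
  have 1: "a*chi1 j \<le> uf i j" using SS_le_u(1)[OF p0_SS i j] by (simp add: p0_def)
  have 2: "uf i j \<le> c*chi1 j" unfolding uf_def
    by (rule cSup_least[OF SS_ne(1)]) (use boxD(2)[OF SS_D(1) i j] in auto)
  have 3: "chi2 j / c \<le> ug i j" unfolding ug_def
    by (rule cInf_greatest[OF SS_ne(2)]) (use boxD(3)[OF SS_D(1) i j] in auto)
  have 4: "ug i j \<le> chi2 j / a" using SS_le_u(2)[OF p0_SS i j] by (simp add: p0_def)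
  show "a * chi1 j \<le> uf i j \<and> uf i j \<le> c * chi1 j \<and> chi2 j / c \<le> ug i j \<and> ug i j \<le> chi2 j / a"
    using 1 2 3 4 by simp
qed

lemma u_lep: "lep uf ug (Tf uf ug) (Tg uf ug)"
  unfolding lep_def
proof (intro allI impI ballI)
  fix i j assume i: "i < N" and j: "j \<in> vidx L"
  have key: "fst p i j \<le> Tf uf ug i j \<and> Tg uf ug i j \<le> snd p i j" if p: "p \<in> SS" for p
  proof -
    have "lep (fst p) (snd p) uf ug" unfolding lep_def using SS_le_u[OF p] by simp
    hence "lep (Tf (fst p) (snd p)) (Tg (fst p) (snd p)) (Tf uf ug) (Tg uf ug)"
      by (rule T_mono[OF SS_D(1)[OF p] u_box])
    thus ?thesis using SS_D(2)[OF p] i j unfolding lep_def by force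
  qed
  have "uf i j = Sup ((\<lambda>p. fst p i j) ` SS)" by (rule uf_def)
  also have "\<dots> \<le> Tf uf ug i j"
    by (rule cSup_least[OF SS_ne(1)]) (use key in auto)
  finally have "uf i j \<le> Tf uf ug i j" .
  moreover have "Tg uf ug i j \<le> Inf ((\<lambda>p. snd p i j) ` SS)"
    by (rule cInf_greatest[OF SS_ne(2)]) (use key in auto)
  moreover have "ug i j = Inf ((\<lambda>p. snd p i j) ` SS)" by (rule ug_def)
  ultimately show "uf i j \<le> Tf uf ug i j \<and> Tg uf ug i j \<le> ug i j" by simp
qed

lemma Tu_SS: "(Tf uf ug, Tg uf ug) \<in> SS"
  using box_inv[OF u_box] T_mono[OF u_box box_inv[OF u_box] u_lep] by (simp add: SS_def)

lemma u_fix: assumes "i < N" "j \<in> vidx L"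
  shows "Tf uf ug i j = uf i j" "Tg uf ug i j = ug i j"
proof -
  have 1: "Tf uf ug i j \<le> uf i j" "ug i j \<le> Tg uf ug i j" using SS_le_u[OF Tu_SS assms] by simp_all
  have 2: "uf i j \<le> Tf uf ug i j \<and> Tg uf ug i j \<le> ug i j" using u_lep assms unfolding lep_def by blast
  show "Tf uf ug i j = uf i j" "Tg uf ug i j = ug i j" using 1 2 by linarith+
qed

lemma u_scheme: "scheme_step N L dx dv dt chi1 chi2 fo go uf ug"
  unfolding scheme_step_def
proof (intro allI impI ballI conjI)
  fix i j assume i: "i < N" and j: "j \<in> vidx L"
  have Ad: "Aj j = (dx/(2*dt) - vel dv j/2)/(2*(dx/(2*dt)))" by (simp add: Aj_def lam_def)
  have Bd: "Bj j = (dx/(2*dt) + vel dv j/2)/(2*(dx/(2*dt)))" by (simp add: Bj_def lam_def)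
  note d = dens_f[OF u_box i]
  have "0 < 1/c" using c_pos by simp
  hence "0 < dens L dv ug i" using d(3) by linarith
  hence "0 < dt * dens L dv ug i" using dt by simp
  hence dg: "0 < 2 + dt * dens L dv ug i" by linarith
  have "0 < dens L dv uf i" using d(1) a by linarith
  hence "0 < dt * dens L dv uf i" using dt by simp
  hence df: "0 < 2 + dt * dens L dv uf i" by linarith
  have ef: "uf i j * (2 + dt * dens L dv ug i) = fo i j + dt*chi1 j + Aj j * uf (csucc N i) j + Bj j * uf (cpred N i) j"
    using u_fix(1)[OF i j] dg unfolding Tf_def by (simp add: divide_eq_eq)
  have eg: "ug i j * (2 + dt * dens L dv uf i) = go i j + dt*chi2 j + Aj j * ug (csucc N i) j + Bj j * ug (cpred N i) j"
    using u_fix(2)[OF i j] df unfolding Tg_def by (simp add: divide_eq_eq)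
  show "(uf i j - fo i j) / dt +
          (lfflux N dv (dx / (2 * dt)) uf i j - lfflux N dv (dx / (2 * dt)) uf (cpred N i) j) / (dx * dv) =
          chi1 j - dens L dv ug i * uf i j"
    unfolding lfflux_def csucc_cpred[OF i] by (rule alg[OF dt dx dv refl Ad Bd ef])
  show "(ug i j - go i j) / dt +
          (lfflux N dv (dx / (2 * dt)) ug i j - lfflux N dv (dx / (2 * dt)) ug (cpred N i) j) / (dx * dv) =
          chi2 j - dens L dv uf i * ug i j"
    unfolding lfflux_def csucc_cpred[OF i] by (rule alg[OF dt dx dv refl Ad Bd eg])
qed

lemma step_ex: "\<exists>fn gn. boxp N L a c chi1 chi2 fn gn \<and> scheme_step N L dx dv dt chi1 chi2 fo go fn gn"
  using u_box u_scheme by blast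

end

lemma step_exists:
  assumes "N > 0" "dv > 0" "dt > 0" "dx > 0" "dx/(2*dt) \<ge> real L * dv / 2"
    "\<forall>j\<in>vidx L. chi1 j > 0" "\<forall>j\<in>vidx L. chi2 j > 0"
    "(\<Sum>j\<in>vidx L. dv * chi1 j) = 1" "(\<Sum>j\<in>vidx L. dv * chi2 j) = 1"
    "0 < a" "a \<le> c" "boxp N L a c chi1 chi2 fo go"
  shows "\<exists>fn gn. boxp N L a c chi1 chi2 fn gn \<and> scheme_step N L dx dv dt chi1 chi2 fo go fn gn"
proof -
  interpret stepctx N L dx dv dt a c chi1 chi2 fo go by (unfold_locales; fact assms)
  show ?thesis by (rule step_ex)
qed



lemma generic:
  fixes f0 g0 :: "nat \<Rightarrow> int \<Rightarrow> real"
  assumes "N > 0" "dv > 0" "dt > 0" "dx > 0" "dx/(2*dt) \<ge> real L * dv / 2"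
    "\<forall>j\<in>vidx L. chi1 j > 0" "\<forall>j\<in>vidx L. chi2 j > 0"
    "(\<Sum>j\<in>vidx L. dv * chi1 j) = 1" "(\<Sum>j\<in>vidx L. dv * chi2 j) = 1"
    "0 < a" "a \<le> c" and b0: "boxp N L a c chi1 chi2 f0 g0"
  shows "\<exists>f g :: nat \<Rightarrow> nat \<Rightarrow> int \<Rightarrow> real.
              (\<forall>i<N. \<forall>j\<in>vidx L. f 0 i j = f0 i j \<and> g 0 i j = g0 i j)
            \<and> (\<forall>n. scheme_step N L dx dv dt chi1 chi2 (f n) (g n) (f (Suc n)) (g (Suc n)))
            \<and> (\<forall>n. \<forall>i<N. \<forall>j\<in>vidx L.
                 a * chi1 j \<le> f n i j \<and> f n i j \<le> c * chi1 j
               \<and> chi2 j / c \<le> g n i j \<and> g n i j \<le> chi2 j / a)"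
proof -
  have "\<forall>p. \<exists>q. boxp N L a c chi1 chi2 (fst p) (snd p) \<longrightarrow>
      boxp N L a c chi1 chi2 (fst q) (snd q) \<and> scheme_step N L dx dv dt chi1 chi2 (fst p) (snd p) (fst q) (snd q)"
  proof
    fix p :: "(nat \<Rightarrow> int \<Rightarrow> real) \<times> (nat \<Rightarrow> int \<Rightarrow> real)"
    show "\<exists>q. boxp N L a c chi1 chi2 (fst p) (snd p) \<longrightarrow>
      boxp N L a c chi1 chi2 (fst q) (snd q) \<and> scheme_step N L dx dv dt chi1 chi2 (fst p) (snd p) (fst q) (snd q)"
    proof (cases "boxp N L a c chi1 chi2 (fst p) (snd p)")
      case True
      then obtain fn gn where "boxp N L a c chi1 chi2 fn gn \<and> scheme_step N L dx dv dt chi1 chi2 (fst p) (snd p) fn gn"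
        using step_exists[OF assms(1-11) True] by blast
      thus ?thesis by (intro exI[of _ "(fn, gn)"]) simp
    qed simp
  qed
  then obtain F where F: "\<And>p. boxp N L a c chi1 chi2 (fst p) (snd p) \<Longrightarrow>
      boxp N L a c chi1 chi2 (fst (F p)) (snd (F p)) \<and> scheme_step N L dx dv dt chi1 chi2 (fst p) (snd p) (fst (F p)) (snd (F p))"
    by metis
  define sq where "sq = rec_nat (f0, g0) (\<lambda>_ p. F p)"
  have sq0: "sq 0 = (f0, g0)" and sqS: "\<And>n. sq (Suc n) = F (sq n)" by (simp_all add: sq_def)
  have B: "boxp N L a c chi1 chi2 (fst (sq n)) (snd (sq n))" for n
    by (induction n) (use b0 F in \<open>auto simp: sq0 sqS\<close>)
  have c1: "\<forall>i<N. \<forall>j\<in>vidx L. fst (sq 0) i j = f0 i j \<and> snd (sq 0) i j = g0 i j" by (simp add: sq0)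
  have c2: "\<forall>n. scheme_step N L dx dv dt chi1 chi2 (fst (sq n)) (snd (sq n)) (fst (sq (Suc n))) (snd (sq (Suc n)))"
      using F B by (simp add: sqS)
  have c3: "\<forall>n. \<forall>i<N. \<forall>j\<in>vidx L.
                 a * chi1 j \<le> fst (sq n) i j \<and> fst (sq n) i j \<le> c * chi1 j
               \<and> chi2 j / c \<le> snd (sq n) i j \<and> snd (sq n) i j \<le> chi2 j / a"
      using B by (simp add: boxp_def)
  show ?thesis
    apply (rule exI[of _ "\<lambda>n. fst (sq n)"])
    apply (rule exI[of _ "\<lambda>n. snd (sq n)"])
    using c1 c2 c3 by simp
qed

theorem theorem5p1:
  fixes N L :: nat and Tlen vstar dx dv dt :: real
    and chi1 chi2 :: "int \<Rightarrow> real"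
    and D1lo D1hi Q1 D2lo D2hi Q2 :: real
    and f0 g0 :: "nat \<Rightarrow> int \<Rightarrow> real"
    and gamma1 gamma2 :: real
  assumes hT: "Tlen > 0" and hN: "N > 0" and hL: "L > 0" and hv: "vstar > 0"
    and hdx: "dx = Tlen / real N" and hdv: "dv = vstar / real L" and hdt: "dt > 0"
    and hchi1: "admissible_chi L dv chi1 D1lo D1hi Q1"
    and hchi2: "admissible_chi L dv chi2 D2lo D2hi Q2"
    and hg1: "0 < gamma1"
    and hg1': "gamma1 < (let M0 = (\<Sum>i<N. \<Sum>j\<in>vidx L. dx * dv * (f0 i j - g0 i j))
                          in (M0 + sqrt (M0^2 + 4 * Tlen)) / (2 * Tlen))"
    and hg2: "0 < gamma2"
    and hinit: "let M0 = (\<Sum>i<N. \<Sum>j\<in>vidx L. dx * dv * (f0 i j - g0 i j));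
                    r = (M0 + sqrt (M0^2 + 4 * Tlen)) / (2 * Tlen)
                in \<forall>i<N. \<forall>j\<in>vidx L.
                     (r - gamma1) * chi1 j \<le> f0 i j \<and> f0 i j \<le> (r + gamma2) * chi1 j
                   \<and> chi2 j / (r + gamma2) \<le> g0 i j \<and> g0 i j \<le> chi2 j / (r - gamma1)"
    and hlam: "dx / (2 * dt) \<ge> vstar / 2"
  shows "let M0 = (\<Sum>i<N. \<Sum>j\<in>vidx L. dx * dv * (f0 i j - g0 i j));
             r = (M0 + sqrt (M0^2 + 4 * Tlen)) / (2 * Tlen)
         in \<exists>f g :: nat \<Rightarrow> nat \<Rightarrow> int \<Rightarrow> real.
              (\<forall>i<N. \<forall>j\<in>vidx L. f 0 i j = f0 i j \<and> g 0 i j = g0 i j)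
            \<and> (\<forall>n. scheme_step N L dx dv dt chi1 chi2 (f n) (g n) (f (Suc n)) (g (Suc n)))
            \<and> (\<forall>n. \<forall>i<N. \<forall>j\<in>vidx L.
                 (r - gamma1) * chi1 j \<le> f n i j \<and> f n i j \<le> (r + gamma2) * chi1 j
               \<and> chi2 j / (r + gamma2) \<le> g n i j \<and> g n i j \<le> chi2 j / (r - gamma1))"
proof -
  define M0 where "M0 = (\<Sum>i<N. \<Sum>j\<in>vidx L. dx * dv * (f0 i j - g0 i j))"
  define r where "r = (M0 + sqrt (M0^2 + 4 * Tlen)) / (2 * Tlen)"
  have g1': "gamma1 < r" using hg1' unfolding Let_def M0_def r_def .
  have b0: "boxp N L (r - gamma1) (r + gamma2) chi1 chi2 f0 g0"
    using hinit unfolding Let_def M0_def[symmetric] r_def[symmetric] boxp_def .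
  have dv: "dv > 0" using hv hL hdv by simp
  have dx: "dx > 0" using hT hN hdx by simp
  have Ldv: "real L * dv = vstar" using hL hdv by simp
  have lamb: "dx/(2*dt) \<ge> real L * dv / 2" using hlam Ldv by simp
  have ch1: "\<forall>j\<in>vidx L. chi1 j > 0" "(\<Sum>j\<in>vidx L. dv * chi1 j) = 1"
    using hchi1 unfolding admissible_chi_def by blast+
  have ch2: "\<forall>j\<in>vidx L. chi2 j > 0" "(\<Sum>j\<in>vidx L. dv * chi2 j) = 1"
    using hchi2 unfolding admissible_chi_def by blast+
  have a: "0 < r - gamma1" using g1' by simp
  have ac: "r - gamma1 \<le> r + gamma2" using hg1 hg2 by simp
  have "\<exists>f g :: nat \<Rightarrow> nat \<Rightarrow> int \<Rightarrow> real.
              (\<forall>i<N. \<forall>j\<in>vidx L. f 0 i j = f0 i j \<and> g 0 i j = g0 i j)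
            \<and> (\<forall>n. scheme_step N L dx dv dt chi1 chi2 (f n) (g n) (f (Suc n)) (g (Suc n)))
            \<and> (\<forall>n. \<forall>i<N. \<forall>j\<in>vidx L.
                 (r - gamma1) * chi1 j \<le> f n i j \<and> f n i j \<le> (r + gamma2) * chi1 j
               \<and> chi2 j / (r + gamma2) \<le> g n i j \<and> g n i j \<le> chi2 j / (r - gamma1))"
    by (rule generic[OF hN dv hdt dx lamb ch1(1) ch2(1) ch1(2) ch2(2) a ac b0])
  thus ?thesis unfolding Let_def M0_def[symmetric] r_def[symmetric] .
qed


end
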